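(* Let $\sigma : X^+ \to S$ be a semigroup choice of generators for a semigroup $S$ and $u, v \in X^+$; then $u\sigma = v\sigma$ if and only if $u\overline{v} \in L_\sigma(S)$. Similarly, if $\sigma : X^* \to M$ is a monoid choice of generators for a monoid $M$ and $u, v \in X^*$, then $u\sigma = v\sigma$ if and only if $u\overline{v} \in L_\sigma(M)$.
   Context: Maps are written on the right. $X^*$, $X^+$: free monoid and free semigroup on $X$. Let $\overline{X} = \{\overline{x} : x \in X\}$ be new symbols, $\hat{X} = X \cup \overline{X}$, with $\overline{x_1\cdots x_n} = \overline{x_n}\cdots\overline{x_1}$ for $x_i \in X$. For a monoid $M$ and surjective monoid morphism $\sigma : X^* \to M$, the loop automaton has vertex set $M$, for each $a \in M$, $x \in X$ an edge $a \to a(x\sigma)$ labelled $x$ and an edge $a(x\sigma) \to a$ labelled $\overline{x}$; the loop problem $L_\sigma(M)$ is the set of labels of paths from the identity to the identity. For a semigroup $S$ and surjective morphism $\sigma : X^+ \to S$, $L_\sigma(S)$ is the loop problem of $S^1$ ($S$ with a new identity adjoined, even if one exists) with respect to the unique extension $\sigma^1 : X^* \to S^1$. *)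

theory Defs
  imports Main
begin

text \<open>Letters of hat X = X \<union> overline X.\<close>
datatype 'x hat = Pos 'x | Neg 'x

fun bar_letter :: "'x hat \<Rightarrow> 'x hat" where
  "bar_letter (Pos x) = Neg x"
| "bar_letter (Neg x) = Pos x"

definition bar :: "'x list \<Rightarrow> 'x hat list" where
  "bar w = rev (map Neg w)"

text \<open>Monoid given explicitly by multiplication mult and identity e; gen x = x sigma.
  Loop automaton: edge a --x--> mult a (gen x); edge mult a (gen x) --bar x--> a.
  reach mult gen a w = set of end vertices of paths from a labelled w.\<close>
fun reach :: "('m \<Rightarrow> 'm \<Rightarrow> 'm) \<Rightarrow> ('x \<Rightarrow> 'm) \<Rightarrow> 'm \<Rightarrow> 'x hat list \<Rightarrow> 'm set" where
  "reach mult gen a [] = {a}"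
| "reach mult gen a (Pos x # w) = reach mult gen (mult a (gen x)) w"
| "reach mult gen a (Neg x # w) = (\<Union>c\<in>{c. mult c (gen x) = a}. reach mult gen c w)"

definition loop_problem :: "('m \<Rightarrow> 'm \<Rightarrow> 'm) \<Rightarrow> 'm \<Rightarrow> ('x \<Rightarrow> 'm) \<Rightarrow> 'x hat list set" where
  "loop_problem mult e gen = {w. e \<in> reach mult gen e w}"

definition monoid_gens :: "('x list \<Rightarrow> 'm::monoid_mult) \<Rightarrow> bool" where
  "monoid_gens \<sigma> \<longleftrightarrow> \<sigma> [] = 1 \<and> (\<forall>u v. \<sigma> (u @ v) = \<sigma> u * \<sigma> v) \<and> surj \<sigma>"

text \<open>Semigroup choice of generators: surjective semigroup morphism X^+ \<rightarrow> S
  (value on the empty word irrelevant).\<close>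
definition semigroup_gens :: "('x list \<Rightarrow> 's::semigroup_mult) \<Rightarrow> bool" where
  "semigroup_gens \<sigma> \<longleftrightarrow> (\<forall>u v. u \<noteq> [] \<longrightarrow> v \<noteq> [] \<longrightarrow> \<sigma> (u @ v) = \<sigma> u * \<sigma> v)
      \<and> \<sigma> ` {w. w \<noteq> []} = UNIV"

definition L_monoid :: "('x list \<Rightarrow> 'm::monoid_mult) \<Rightarrow> 'x hat list set" where
  "L_monoid \<sigma> = loop_problem (*) 1 (\<lambda>x. \<sigma> [x])"

text \<open>S^1 = S with a new identity None adjoined.\<close>
fun mult1 :: "'s::semigroup_mult option \<Rightarrow> 's option \<Rightarrow> 's option" where
  "mult1 None b = b"
| "mult1 a None = a"
| "mult1 (Some a) (Some b) = Some (a * b)"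

text \<open>L_sigma(S): loop problem of S^1 w.r.t. the extension sigma^1, whose generator images are Some (x sigma).\<close>
definition L_semigroup :: "('x list \<Rightarrow> 's::semigroup_mult) \<Rightarrow> 'x hat list set" where
  "L_semigroup \<sigma> = loop_problem mult1 None (\<lambda>x. Some (\<sigma> [x]))"

end

theory Submission
  imports Defs
begin

lemma reach_pos:
  "reach mult g a (map Pos u @ w) = reach mult g (foldl (\<lambda>a x. mult a (g x)) a u) w"
  by (induction u arbitrary: a) auto

lemma bar_snoc: "bar (v @ [x]) = Neg x # bar v"
  by (simp add: bar_def)

lemma reach_neg:
  "reach mult g a (bar v) = {c. foldl (\<lambda>a x. mult a (g x)) c v = a}"
proof (induction v arbitrary: a rule: rev_induct)
  case Nil
  then show ?case by (auto simp: bar_def)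
next
  case (snoc x v)
  then show ?case by (auto simp: bar_snoc)
qed

lemma loop_iff:
  "(e \<in> reach mult g e (map Pos u @ bar v)) =
   (foldl (\<lambda>a x. mult a (g x)) e u = foldl (\<lambda>a x. mult a (g x)) e v)"
  by (auto simp: reach_pos reach_neg)

lemma fold_monoid:
  assumes "monoid_gens \<sigma>"
  shows "foldl (\<lambda>a x. a * \<sigma> [x]) 1 w = \<sigma> w"
proof (induction w rule: rev_induct)
  case Nil
  then show ?case using assms by (simp add: monoid_gens_def)
next
  case (snoc x w)
  then show ?case using assms by (simp add: monoid_gens_def)
qed

lemma fold_semi:
  assumes "semigroup_gens \<sigma>" "w \<noteq> []"
  shows "foldl (\<lambda>a x. mult1 a (Some (\<sigma> [x]))) None w = Some (\<sigma> w)"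
  using assms(2)
proof (induction w rule: rev_induct)
  case Nil
  then show ?case by simp
next
  case (snoc x w)
  then show ?case using assms(1) by (cases "w = []") (auto simp: semigroup_gens_def)
qed

theorem corollary4p2:
  shows "(\<forall>(\<sigma> :: 'x list \<Rightarrow> 's::semigroup_mult) u v.
            semigroup_gens \<sigma> \<longrightarrow> u \<noteq> [] \<longrightarrow> v \<noteq> [] \<longrightarrow>
            (\<sigma> u = \<sigma> v \<longleftrightarrow> map Pos u @ bar v \<in> L_semigroup \<sigma>))
       \<and> (\<forall>(\<sigma> :: 'y list \<Rightarrow> 'm::monoid_mult) u v.
            monoid_gens \<sigma> \<longrightarrow>
            (\<sigma> u = \<sigma> v \<longleftrightarrow> map Pos u @ bar v \<in> L_monoid \<sigma>))"
  by (auto simp: L_semigroup_def L_monoid_def loop_problem_def loop_iff fold_semi fold_monoid)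

end
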